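(* $$\limsup_{n\to\infty}\bigl(V(n+1)-V(n)\bigr)=+\infty \quad\text{and}\quad \liminf_{n\to\infty}\bigl(V(n+1)-V(n)\bigr)=-\infty.$$
   Context: For a positive integer $n$, an integer $a$ is called regular modulo $n$ if there exists an integer $x$ with $a^2x\equiv a \pmod n$. Let $V(n)$ denote the number of integers $a$ with $1\le a\le n$ that are regular modulo $n$. (Known fact: $V$ is multiplicative, $V(1)=1$, and $V(p^{\alpha})=p^{\alpha}-p^{\alpha-1}+1$ for a prime $p$ and $\alpha\ge1$.) *)

theory Defs
  imports "HOL-Analysis.Analysis" "HOL-Number_Theory.Number_Theory"
begin

definition regular_mod :: "int \<Rightarrow> nat \<Rightarrow> bool" where
  "regular_mod a n \<longleftrightarrow> (\<exists>x::int. [a^2 * x = a] (mod int n))"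

definition V :: "nat \<Rightarrow> nat" where
  "V n = card {a::int. 1 \<le> a \<and> a \<le> int n \<and> regular_mod a n}"

end

theory Submission
  imports Defs
begin

lemma R_finite: "finite {a::int. 1 \<le> a \<and> a \<le> int n \<and> regular_mod a n}"
  by (rule finite_subset[of _ "{1..int n}"]) auto

lemma V_lower: "totient n \<le> V n"
proof -
  have sub: "int ` totatives n \<subseteq> {a::int. 1 \<le> a \<and> a \<le> int n \<and> regular_mod a n}"
  proof
    fix b assume "b \<in> int ` totatives n"
    then obtain k where k: "k \<in> totatives n" "b = int k" by auto
    have cp: "coprime (int k) (int n)" using k by (auto simp: totatives_def)
    then obtain x where x: "[int k * x = 1] (mod int n)" using cong_solve_coprime_int by blast
    have "[int k * (int k * x) = int k * 1] (mod int n)" by (rule cong_scalar_left[OF x])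
    hence "[(int k)^2 * x = int k] (mod int n)" by (simp add: power2_eq_square mult.assoc)
    thus "b \<in> {a::int. 1 \<le> a \<and> a \<le> int n \<and> regular_mod a n}"
      using k by (auto simp: totatives_def regular_mod_def)
  qed
  have "totient n = card (int ` totatives n)"
    by (simp add: totient_def card_image)
  also have "\<dots> \<le> V n" unfolding V_def by (rule card_mono[OF R_finite sub])
  finally show ?thesis .
qed

lemma not_regular_2mod4:
  assumes "4 dvd n" shows "\<not> regular_mod (4 * int j + 2) n"
proof
  assume "regular_mod (4 * int j + 2) n"
  then obtain x where x: "(((4 * int j + 2))^2 * x) mod int n = (4 * int j + 2) mod int n"
    by (auto simp: regular_mod_def cong_def)
  have d: "(4::int) dvd int n" using assms by presburger
  have "(((4 * int j + 2))^2 * x) mod int n mod 4 = (4 * int j + 2) mod int n mod 4"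
    using x by simp
  hence e: "(((4 * int j + 2))^2 * x) mod 4 = (4 * int j + 2) mod 4"
    by (simp only: mod_mod_cancel[OF d])
  have "((4 * int j + 2))^2 * x = 4 * ((2 * int j + 1)^2 * x)"
    by (simp add: power2_eq_square algebra_simps)
  hence "(((4 * int j + 2))^2 * x) mod 4 = 0" by (simp only:) simp
  moreover have "(4 * int j + 2) mod 4 = 2" by simp
  ultimately show False using e by simp
qed

lemma V_upper:
  assumes "4 dvd n" shows "4 * V n \<le> 3 * n"
proof -
  define B where "B = (\<lambda>j. 4 * int j + 2) ` {..<n div 4}"
  have cardB: "card B = n div 4" unfolding B_def by (subst card_image) (auto simp: inj_on_def)
  have Bsub: "B \<subseteq> {1..int n}" unfolding B_def using assms by auto
  have "{a::int. 1 \<le> a \<and> a \<le> int n \<and> regular_mod a n} \<subseteq> {1..int n} - B"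
    using not_regular_2mod4[OF assms] unfolding B_def by auto
  hence "V n \<le> card ({1..int n} - B)" unfolding V_def by (intro card_mono) auto
  also have "\<dots> = n - n div 4" using Bsub cardB by (simp add: card_Diff_subset finite_subset)
  finally show ?thesis using assms by auto
qed

lemma limsup_infty:
  fixes f :: "nat \<Rightarrow> ereal"
  assumes "\<And>M N. \<exists>n\<ge>N. ereal M \<le> f n"
  shows "limsup f = \<infinity>"
proof (rule ereal_top)
  fix B
  show "ereal B \<le> limsup f"
    unfolding limsup_INF_SUP
  proof (rule INF_greatest)
    fix N :: nat
    obtain n where "n \<ge> N" "ereal B \<le> f n" using assms by blast
    thus "ereal B \<le> (SUP m\<in>{N..}. f m)" by (intro SUP_upper2[of n]) auto
  qed
qed

lemma liminf_minfty:
  fixes f :: "nat \<Rightarrow> ereal"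
  assumes "\<And>M N. \<exists>n\<ge>N. f n \<le> ereal M"
  shows "liminf f = - \<infinity>"
proof (rule ereal_bot)
  fix B
  show "liminf f \<le> ereal B"
    unfolding liminf_SUP_INF
  proof (rule SUP_least)
    fix N :: nat
    obtain n where "n \<ge> N" "f n \<le> ereal B" using assms by blast
    thus "(INF m\<in>{N..}. f m) \<le> ereal B" by (intro INF_lower2[of n]) auto
  qed
qed

lemma pow_mod4: "(b::nat) mod 4 = 1 \<Longrightarrow> b ^ k mod 4 = 1"
proof -
  assume "b mod 4 = 1"
  hence "[b = 1] (mod 4)" by (simp add: cong_def)
  hence "[b ^ k = 1 ^ k] (mod 4)" by (rule cong_pow)
  thus ?thesis by (simp add: cong_def)
qed

lemma ar1: "4*(y::real) \<le> 3*(5*t-1) \<Longrightarrow> 4*t \<le> x \<Longrightarrow> 4*M \<le> t \<Longrightarrow> M \<le> x - y"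
  by (smt (verit))

lemma ar2: "4 * (y::real) \<le> 3 * (7 * z + 1) \<Longrightarrow> 6 * z \<le> x \<Longrightarrow> 4 * \<bar>M\<bar> + 2 \<le> z \<Longrightarrow> y - x \<le> - M"
  by (smt (verit))

lemma pos_witness: "\<exists>n\<ge>N. real (V (n+1)) - real (V n) \<ge> M"
proof -
  define j where "j = N + nat \<lceil>4 * M\<rceil>"
  define t :: nat where "t = 5 ^ j"
  have jt: "j < t" unfolding t_def
    using less_exp[of j] power_mono[of "2::nat" 5 j] by linarith
  have m4: "(5 * t) mod 4 = 1" using pow_mod4[of 5 "Suc j"] by (simp add: t_def)
  have t1: "t \<ge> 1" using jt by simp
  have d4: "4 dvd (5 * t - 1)" using m4 t1 by presburger
  have up: "4 * V (5 * t - 1) \<le> 3 * (5 * t - 1)" by (rule V_upper[OF d4])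
  have "totient (5 ^ Suc j) = 5 ^ j * 4"
    by (subst totient_prime_power_Suc) auto
  hence lo: "4 * t \<le> V (5 * t)" using V_lower[of "5 ^ Suc j"] by (simp add: t_def)
  have eq: "5 * t - 1 + 1 = 5 * t" using t1 by simp
  have up': "4 * real (V (5 * t - 1)) \<le> 3 * (5 * real t - 1)"
    using up t1 by (simp add: of_nat_diff flip: of_nat_mult) 
  have lo': "4 * real t \<le> real (V (5 * t))" using lo by linarith
  have "real j \<ge> 4 * M" unfolding j_def by linarith
  hence "real t \<ge> 4 * M" using jt by linarith
  hence "real (V (5 * t - 1 + 1)) - real (V (5 * t - 1)) \<ge> M"
    unfolding eq using up' lo' ar1 by blast
  moreover have "5 * t - 1 \<ge> N" using jt unfolding j_def by linarith
  ultimately show ?thesis by blast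
qed

lemma neg_witness: "\<exists>n\<ge>N. real (V (n+1)) - real (V n) \<le> - M"
proof -
  define j where "j = N + nat \<lceil>4 * \<bar>M\<bar>\<rceil> + 1"
  define s :: nat where "s = 49 ^ j"
  have js: "j < s" unfolding s_def
    using less_exp[of j] power_mono[of "2::nat" 49 j] by linarith
  have m4: "s mod 4 = 1" using pow_mod4[of 49 j] by (simp add: s_def)
  have d4: "4 dvd (7 * s + 1)" using m4 by presburger
  have up: "4 * V (7 * s + 1) \<le> 3 * (7 * s + 1)" by (rule V_upper[OF d4])
  have p: "(7::nat) ^ Suc (2 * j) = 7 * s" by (simp add: s_def power_mult)
  have "totient (7 ^ Suc (2 * j)) = 7 ^ (2 * j) * 6"
    by (subst totient_prime_power_Suc) auto
  hence lo: "6 * s \<le> V (7 * s)" using V_lower[of "7 ^ Suc (2 * j)"] p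
    by (simp add: s_def power_mult)
  have up': "4 * real (V (7 * s + 1)) \<le> 3 * (7 * real s + 1)"
    using up by (simp flip: of_nat_mult) 
  have lo': "6 * real s \<le> real (V (7 * s))" using lo by linarith
  have "real j \<ge> 4 * \<bar>M\<bar> + 1" unfolding j_def by linarith
  hence "real s \<ge> 4 * \<bar>M\<bar> + 2" using js by linarith
  hence "real (V (7 * s + 1)) - real (V (7 * s)) \<le> - M"
    using up' lo' ar2 by blast
  moreover have "7 * s \<ge> N" using js unfolding j_def by linarith
  ultimately show ?thesis by blast
qed

theorem proposition3:
  shows "limsup (\<lambda>n. ereal (real (V (n + 1)) - real (V n))) = \<infinity> \<and>
         liminf (\<lambda>n. ereal (real (V (n + 1)) - real (V n))) = - \<infinity>"
proof
  show "limsup (\<lambda>n. ereal (real (V (n + 1)) - real (V n))) = \<infinity>"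
    by (rule limsup_infty) (use pos_witness in auto)
  show "liminf (\<lambda>n. ereal (real (V (n + 1)) - real (V n))) = - \<infinity>"
  proof (rule liminf_minfty)
    fix M N
    obtain n where "n \<ge> N" "real (V (n+1)) - real (V n) \<le> - (- M)"
      using neg_witness by blast
    thus "\<exists>n\<ge>N. ereal (real (V (n + 1)) - real (V n)) \<le> ereal M" by auto
  qed
qed

end
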